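(* Let $J_0\in\mathbb{R}^{3\times3}$ be a symmetric positive definite (inertia) matrix and consider the rigid body attitude dynamics $$\frac{d}{dt}(J\omega)=\tau,\qquad J=RJ_0R^{\mathsf T},\qquad \dot R=\hat\omega R=R\hat\Omega,$$ with $R\in\mathsf{SO}(3)$, $\omega,\Omega\in\mathbb{R}^3$ (inertial and body-fixed angular velocity), and control moment $\tau\in\mathbb{R}^3$. Let $G_E=\mathrm{diag}[\epsilon_1,\epsilon_2,\epsilon_3]$ with $\epsilon_1,\epsilon_2,\epsilon_3$ distinct positive constants, and let $k_E,k_v>0$. Consider the observer with state $(\bar R,\bar\omega)\in\mathsf{SO}(3)\times\mathbb{R}^3$, $$\frac{d}{dt}(J\bar\omega)=\tau+\tfrac12 k_E J^{-1}e_{R_E},\qquad \dot{\bar R}=\big[Q_E^{\mathsf T}(\bar\omega+k_vJ^{-1}e_{R_E})\big]^\wedge\bar R,$$ where $$Q_E=R\bar R^{\mathsf T},\quad \Psi_E=\tfrac12\mathrm{tr}[G_E(I_{3\times3}-Q_E)],\quad e_{R_E}=\tfrac12(Q_EG_E-G_EQ_E^{\mathsf T})^\vee,\quad e_{\omega_E}=J\omega-J\bar\omega.$$ Define $$\omega_E=\omega-\bar\omega-k_vJ^{-1}e_{R_E},\qquad E_o(R,\bar R)=\tfrac12\big(\mathrm{tr}[Q_EG_E]I_{3\times3}-2\hat e_{R_E}-G_EQ_E^{\mathsf T}\big).$$ Then: (i) $\Psi_E$ is positive definite about $R=\bar R$ (i.e., $\Psi_E\ge0$ with equality only when $Q_E=I_{3\times3}$).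 (ii) Let $n_1=\min\{\epsilon_1+\epsilon_2,\epsilon_2+\epsilon_3,\epsilon_3+\epsilon_1\}$, $n_2=\max\{(\epsilon_1-\epsilon_2)^2,(\epsilon_2-\epsilon_3)^2,(\epsilon_3-\epsilon_1)^2\}$, $n_3=\max\{(\epsilon_1+\epsilon_2)^2,(\epsilon_2+\epsilon_3)^2,(\epsilon_3+\epsilon_1)^2\}$, $n_4=\max\{\epsilon_1+\epsilon_2,\epsilon_2+\epsilon_3,\epsilon_3+\epsilon_1\}$, $n_5=\min\{(\epsilon_1+\epsilon_2)^2,(\epsilon_2+\epsilon_3)^2,(\epsilon_3+\epsilon_1)^2\}$, and let $\psi_E<n_1$ be a constant. Then $$\frac{n_1}{n_2+n_3}\|e_{R_E}\|^2\le\Psi_E\le\frac{n_1n_4}{n_5(n_1-\psi_E)}\|e_{R_E}\|^2,$$ where the upper bound holds whenever $\Psi_E<\psi_E$. (iii) $\dot Q_E=\hat\omega_EQ_E$. (iv) $\dot\Psi_E=\omega_E^{\mathsf T}e_{R_E}$. (v) $\dot e_{R_E}=E_o(R,\bar R)\,\omega_E$. (vi) $\dot e_{\omega_E}=-\tfrac12k_EJ^{-1}e_{R_E}$.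
   Context: $\mathsf{SO}(3)=\{R\in\mathbb{R}^{3\times3}: R^{\mathsf T}R=I,\ \det R=1\}$. The hat map $\wedge:\mathbb{R}^3\to\mathfrak{so}(3)$ sends $x$ to the skew-symmetric matrix $\hat x$ with $\hat x y=x\times y$ for all $y\in\mathbb{R}^3$; $\vee$ is its inverse. $R$ maps body-fixed frame representations to the inertial frame; $\bar R$ is the attitude of an estimate frame. All derivatives are along solutions of the dynamics and observer above. *)

theory Defs
  imports "HOL-Analysis.Analysis"
begin

definition SO3 :: "(real^3^3) set" where
  "SO3 = {R. transpose R ** R = mat 1 \<and> det R = 1}"

definition hat :: "real^3 \<Rightarrow> real^3^3" where
  "hat x = (\<chi> i j. (cross3 x (axis j 1)) $ i)"

text \<open>Vee map: inverse of the hat map on skew-symmetric matrices.\<close>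
definition vee :: "real^3^3 \<Rightarrow> real^3" where
  "vee M = vector [M$3$2, M$1$3, M$2$1]"

definition diag3 :: "real \<Rightarrow> real \<Rightarrow> real \<Rightarrow> real^3^3" where
  "diag3 a b c = (\<chi> i j. if i = j then (if i = 1 then a else if i = 2 then b else c) else 0)"

definition QE :: "real^3^3 \<Rightarrow> real^3^3 \<Rightarrow> real^3^3" where
  "QE R Rb = R ** transpose Rb"

definition PsiE :: "real^3^3 \<Rightarrow> real^3^3 \<Rightarrow> real^3^3 \<Rightarrow> real" where
  "PsiE G R Rb = (1/2) * trace (G ** (mat 1 - QE R Rb))"

definition eRE :: "real^3^3 \<Rightarrow> real^3^3 \<Rightarrow> real^3^3 \<Rightarrow> real^3" where
  "eRE G R Rb = (1/2) *\<^sub>R vee (QE R Rb ** G - G ** transpose (QE R Rb))"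

definition Eo :: "real^3^3 \<Rightarrow> real^3^3 \<Rightarrow> real^3^3 \<Rightarrow> real^3^3" where
  "Eo G R Rb = (1/2) *\<^sub>R (trace (QE R Rb ** G) *\<^sub>R mat 1 - 2 *\<^sub>R hat (eRE G R Rb)
                              - G ** transpose (QE R Rb))"

end

theory Submission
  imports Defs
begin


lemma so3_alg:
  fixes a b c d e f g h i \<epsilon>1 \<epsilon>2 \<epsilon>3 n1 n2 n3 n4 n5 \<psi> :: real
  assumes c1: "a*a+d*d+g*g=1" and c2: "b*b+e*e+h*h=1" and c3: "c*c+f*f+i*i=1"
   and c12: "a*b+d*e+g*h=0" and c13: "a*c+d*f+g*i=0" and c23: "b*c+e*f+h*i=0"
   and r1: "a*a+b*b+c*c=1" and r2: "d*d+e*e+f*f=1" and r3: "g*g+h*h+i*i=1"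
   and r12: "a*d+b*e+c*f=0" and r13: "a*g+b*h+c*i=0" and r23: "d*g+e*h+f*i=0"
   and dt: "a*(e*i-f*h) - b*(d*i-f*g) + c*(d*h-e*g) = 1"
   and ep: "\<epsilon>1 > 0" "\<epsilon>2 > 0" "\<epsilon>3 > 0"
  defines "Psi \<equiv> 1/2*(\<epsilon>1*(1-a)+\<epsilon>2*(1-e)+\<epsilon>3*(1-i))"
    and "E2 \<equiv> (1/2*(\<epsilon>2*h-\<epsilon>3*f))^2+(1/2*(\<epsilon>3*c-\<epsilon>1*g))^2+(1/2*(\<epsilon>1*d-\<epsilon>2*b))^2"
  shows "Psi \<ge> 0" and "Psi = 0 \<longleftrightarrow> a=1 \<and> b=0 \<and> c=0 \<and> d=0 \<and> e=1 \<and> f=0 \<and> g=0 \<and> h=0 \<and> i=1"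
    and "\<lbrakk>0 < n1; n1 \<le> \<epsilon>1+\<epsilon>2; n1 \<le> \<epsilon>2+\<epsilon>3; n1 \<le> \<epsilon>3+\<epsilon>1;
          (\<epsilon>1-\<epsilon>2)^2 \<le> n2; (\<epsilon>2-\<epsilon>3)^2 \<le> n2; (\<epsilon>3-\<epsilon>1)^2 \<le> n2;
          (\<epsilon>1+\<epsilon>2)^2 \<le> n3; (\<epsilon>2+\<epsilon>3)^2 \<le> n3; (\<epsilon>3+\<epsilon>1)^2 \<le> n3\<rbrakk>
          \<Longrightarrow> n1 / (n2 + n3) * E2 \<le> Psi"
    and "\<lbrakk>0 < n1; n1 \<le> \<epsilon>1+\<epsilon>2; n1 \<le> \<epsilon>2+\<epsilon>3; n1 \<le> \<epsilon>3+\<epsilon>1;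
          \<epsilon>1+\<epsilon>2 \<le> n4; \<epsilon>2+\<epsilon>3 \<le> n4; \<epsilon>3+\<epsilon>1 \<le> n4;
          0 < n5; n5 \<le> (\<epsilon>1+\<epsilon>2)^2; n5 \<le> (\<epsilon>2+\<epsilon>3)^2; n5 \<le> (\<epsilon>3+\<epsilon>1)^2;
          \<psi> < n1; Psi < \<psi>\<rbrakk>
          \<Longrightarrow> Psi \<le> n1 * n4 / (n5 * (n1 - \<psi>)) * E2"
proof -
  have cf: "a = e*i-f*h" "b = -(d*i-f*g)" "c = d*h-e*g"
   "d = -(b*i-c*h)" "e = a*i-c*g" "f = -(a*h-b*g)"
   "g = b*f-c*e" "h = -(a*f-c*d)" "i = a*e-b*d"
  using r1 r12 r13 dt apply algebra
  using r1 r12 r13 dt apply algebra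
  using r1 r12 r13 dt apply algebra
  using r2 r12 r23 dt apply algebra
  using r2 r12 r23 dt apply algebra
  using r2 r12 r23 dt apply algebra
  using r3 r13 r23 dt apply algebra
  using r3 r13 r23 dt apply algebra
  using r3 r13 r23 dt apply algebra
  done
  define X0 where "X0 = 1+a+e+i"
  define X1 where "X1 = 1+a-e-i"
  define X2 where "X2 = 1-a+e-i"
  define X3 where "X3 = 1-a-e+i"
  have F01: "(h-f)^2 = X0*X1" unfolding X0_def X1_def using c1 c2 c3 c12 c13 c23 r1 r2 r3 r12 r13 r23 cf by algebra
  have F02: "(c-g)^2 = X0*X2" unfolding X0_def X2_def using c1 c2 c3 c12 c13 c23 r1 r2 r3 r12 r13 r23 cf by algebra
  have F03: "(d-b)^2 = X0*X3" unfolding X0_def X3_def using c1 c2 c3 c12 c13 c23 r1 r2 r3 r12 r13 r23 cf by algebra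
  have F12: "(b+d)^2 = X1*X2" unfolding X1_def X2_def using c1 c2 c3 c12 c13 c23 r1 r2 r3 r12 r13 r23 cf by algebra
  have F13: "(c+g)^2 = X1*X3" unfolding X1_def X3_def using c1 c2 c3 c12 c13 c23 r1 r2 r3 r12 r13 r23 cf by algebra
  have F23: "(f+h)^2 = X2*X3" unfolding X2_def X3_def using c1 c2 c3 c12 c13 c23 r1 r2 r3 r12 r13 r23 cf by algebra
  have sum4: "X0+X1+X2+X3 = 4" unfolding X0_def X1_def X2_def X3_def by simp
  have P1: "h*h-f*f = c*c-g*g" using c3 r3 by algebra
  have P2: "c*c-g*g = d*d-b*b" using c1 r1 by algebra
  have X1nn: "X1 \<ge> 0"
  proof -
    have "4*X1 = X1*X1 + (h-f)^2 + (b+d)^2 + (c+g)^2" using F01 F12 F13 sum4 by algebra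
    moreover have "X1*X1 + (h-f)^2 + (b+d)^2 + (c+g)^2 \<ge> 0" by simp
    ultimately show ?thesis by linarith
  qed
  have X2nn: "X2 \<ge> 0"
  proof -
    have "4*X2 = X2*X2 + (c-g)^2 + (b+d)^2 + (f+h)^2" using F02 F12 F23 sum4 by algebra
    moreover have "X2*X2 + (c-g)^2 + (b+d)^2 + (f+h)^2 \<ge> 0" by simp
    ultimately show ?thesis by linarith
  qed
  have X3nn: "X3 \<ge> 0"
  proof -
    have "4*X3 = X3*X3 + (d-b)^2 + (c+g)^2 + (f+h)^2" using F03 F13 F23 sum4 by algebra
    moreover have "X3*X3 + (d-b)^2 + (c+g)^2 + (f+h)^2 \<ge> 0" by simp
    ultimately show ?thesis by linarith
  qed
  have X0nn: "X0 \<ge> 0"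
  proof -
    have "4*X0 = X0*X0 + (h-f)^2 + (c-g)^2 + (d-b)^2" using F01 F02 F03 sum4 by algebra
    moreover have "X0*X0 + (h-f)^2 + (c-g)^2 + (d-b)^2 \<ge> 0" by simp
    ultimately show ?thesis by linarith
  qed
  define h1 where "h1 = \<epsilon>2+\<epsilon>3"
  define h2 where "h2 = \<epsilon>3+\<epsilon>1"
  define h3 where "h3 = \<epsilon>1+\<epsilon>2"
  define d1 where "d1 = \<epsilon>2-\<epsilon>3"
  define d2 where "d2 = \<epsilon>3-\<epsilon>1"
  define d3 where "d3 = \<epsilon>1-\<epsilon>2"
  have Psi_eq: "4*Psi = h1*X1+h2*X2+h3*X3"
    unfolding Psi_def h1_def h2_def h3_def X1_def X2_def X3_def by (simp add: algebra_simps)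
  have E2_eq: "16*E2 = X0*(h1^2*X1+h2^2*X2+h3^2*X3) + d1^2*(X2*X3) + d2^2*(X1*X3) + d3^2*(X1*X2)"
  proof -
    have "16*E2 = h1^2*(h-f)^2 + d1^2*(f+h)^2 + 2*h1*d1*(h*h-f*f)
                + h2^2*(c-g)^2 + d2^2*(c+g)^2 + 2*h2*d2*(c*c-g*g)
                + h3^2*(d-b)^2 + d3^2*(b+d)^2 + 2*h3*d3*(d*d-b*b)"
      unfolding E2_def h1_def h2_def h3_def d1_def d2_def d3_def by algebra
    also have "\<dots> = h1^2*(X0*X1) + d1^2*(X2*X3) + h2^2*(X0*X2) + d2^2*(X1*X3)
         + h3^2*(X0*X3) + d3^2*(X1*X2) + 2*(d*d-b*b)*(h1*d1+h2*d2+h3*d3)"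
      using P1 P2 by (simp only: F01 F02 F03 F12 F13 F23 P1 P2) (simp add: algebra_simps)
    also have "h1*d1+h2*d2+h3*d3 = 0" unfolding h1_def h2_def h3_def d1_def d2_def d3_def
      by (simp add: algebra_simps)
    finally show ?thesis by (simp add: algebra_simps)
  qed
  have hpos: "h1 > 0" "h2 > 0" "h3 > 0" using ep unfolding h1_def h2_def h3_def by auto
  show Pnn: "Psi \<ge> 0"
  proof -
    have "h1*X1 \<ge> 0" "h2*X2 \<ge> 0" "h3*X3 \<ge> 0" using hpos X1nn X2nn X3nn by auto
    then show ?thesis using Psi_eq by linarith
  qed
  show "Psi = 0 \<longleftrightarrow> a=1 \<and> b=0 \<and> c=0 \<and> d=0 \<and> e=1 \<and> f=0 \<and> g=0 \<and> h=0 \<and> i=1"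
  proof
    assume "Psi = 0"
    have "h1*X1 \<ge> 0" "h2*X2 \<ge> 0" "h3*X3 \<ge> 0" using hpos X1nn X2nn X3nn by auto
    then have "h1*X1 = 0" "h2*X2 = 0" "h3*X3 = 0" using Psi_eq \<open>Psi = 0\<close> by linarith+
    then have z: "X1 = 0" "X2 = 0" "X3 = 0" using hpos by auto
    then have aei: "a = 1" "e = 1" "i = 1" unfolding X1_def X2_def X3_def by linarith+
    have "(h-f)^2 = 0" "(c-g)^2 = 0" "(d-b)^2 = 0" "(b+d)^2 = 0" "(c+g)^2 = 0" "(f+h)^2 = 0"
      using F01 F02 F03 F12 F13 F23 z by auto
    then have "h-f = 0" "c-g = 0" "d-b=0" "b+d=0" "c+g=0" "f+h=0" by auto
    then show "a=1 \<and> b=0 \<and> c=0 \<and> d=0 \<and> e=1 \<and> f=0 \<and> g=0 \<and> h=0 \<and> i=1"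
      using aei by linarith
  next
    assume "a=1 \<and> b=0 \<and> c=0 \<and> d=0 \<and> e=1 \<and> f=0 \<and> g=0 \<and> h=0 \<and> i=1"
    then show "Psi = 0" unfolding Psi_def by simp
  qed
  define S where "S = X1+X2+X3"
  have S_eq: "X0 = 4 - S" using sum4 unfolding S_def by linarith
  have Snn: "S \<ge> 0" using X1nn X2nn X3nn S_def by linarith
  have X0le: "X0 \<le> 4" "X1 \<le> 4" "X2 \<le> 4" "X3 \<le> 4" using sum4 X0nn X1nn X2nn X3nn by linarith+
  have Psi_low: "n1 * S \<le> 4*Psi" if "n1 \<le> \<epsilon>1+\<epsilon>2" "n1 \<le> \<epsilon>2+\<epsilon>3" "n1 \<le> \<epsilon>3+\<epsilon>1" for n1
  proof -
    have "n1*X1 \<le> h1*X1" "n1*X2 \<le> h2*X2" "n1*X3 \<le> h3*X3"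
      using that X1nn X2nn X3nn unfolding h1_def h2_def h3_def
      by (auto intro!: mult_right_mono)
    then show ?thesis using Psi_eq unfolding S_def by (simp add: algebra_simps)
  qed
  show "n1 / (n2 + n3) * E2 \<le> Psi"
    if as: "0 < n1" "n1 \<le> \<epsilon>1+\<epsilon>2" "n1 \<le> \<epsilon>2+\<epsilon>3" "n1 \<le> \<epsilon>3+\<epsilon>1"
          "(\<epsilon>1-\<epsilon>2)^2 \<le> n2" "(\<epsilon>2-\<epsilon>3)^2 \<le> n2" "(\<epsilon>3-\<epsilon>1)^2 \<le> n2"
          "(\<epsilon>1+\<epsilon>2)^2 \<le> n3" "(\<epsilon>2+\<epsilon>3)^2 \<le> n3" "(\<epsilon>3+\<epsilon>1)^2 \<le> n3"
  proof -
    have n2nn: "n2 \<ge> 0" using as(5) by (meson order_trans zero_le_power2)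
    have n3pos: "n3 > 0" using as(8) ep by (smt (verit) zero_less_power)
    have A: "h1^2*X1+h2^2*X2+h3^2*X3 \<le> n3*S"
    proof -
      have "h1^2*X1 \<le> n3*X1" "h2^2*X2 \<le> n3*X2" "h3^2*X3 \<le> n3*X3"
        using as X1nn X2nn X3nn unfolding h1_def h2_def h3_def
        by (auto intro!: mult_right_mono simp: add.commute)
      then show ?thesis unfolding S_def by (simp add: algebra_simps)
    qed
    have A2: "X0*(h1^2*X1+h2^2*X2+h3^2*X3) \<le> 4*(n3*S)"
    proof -
      have "X0*(h1^2*X1+h2^2*X2+h3^2*X3) \<le> X0*(n3*S)" using A X0nn by (rule mult_left_mono)
      also have "\<dots> \<le> 4*(n3*S)" using X0le(1) n3pos Snn by (intro mult_right_mono) auto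
      finally show ?thesis .
    qed
    have B: "d1^2*(X2*X3) + d2^2*(X1*X3) + d3^2*(X1*X2) \<le> 4*(n2*S)"
    proof -
      have "X2*X3 \<le> X2*4" using X0le(4) X2nn by (rule mult_left_mono)
      have "X3*X1 \<le> X3*4" using X0le(2) X3nn by (rule mult_left_mono)
      have "X1*X2 \<le> X1*4" using X0le(3) X1nn by (rule mult_left_mono)
      have "X1*X3 \<le> X3*4" using \<open>X3*X1 \<le> X3*4\<close> by (simp add: mult.commute)
      have "X2*X3 + X1*X3 + X1*X2 \<le> 4*S" unfolding S_def using \<open>X2*X3 \<le> X2*4\<close> \<open>X1*X3 \<le> X3*4\<close> \<open>X1*X2 \<le> X1*4\<close> by (simp add: algebra_simps)
      have "d1^2*(X2*X3) \<le> n2*(X2*X3)" "d2^2*(X1*X3) \<le> n2*(X1*X3)" "d3^2*(X1*X2) \<le> n2*(X1*X2)"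
        using as X1nn X2nn X3nn unfolding d1_def d2_def d3_def
        by (auto intro!: mult_right_mono)
      then have "d1^2*(X2*X3) + d2^2*(X1*X3) + d3^2*(X1*X2) \<le> n2*(X2*X3 + X1*X3 + X1*X2)"
        by (simp add: algebra_simps)
      also have "\<dots> \<le> n2*(4*S)" using \<open>X2*X3 + X1*X3 + X1*X2 \<le> 4*S\<close> n2nn by (rule mult_left_mono)
      finally show ?thesis by simp
    qed
    have E2le: "E2 \<le> (n2+n3)*S/4" using E2_eq A2 B by (simp add: algebra_simps)
    have "n1 / (n2 + n3) * E2 \<le> n1 / (n2 + n3) * ((n2+n3)*S/4)"
      using E2le as n2nn n3pos by (intro mult_left_mono) auto
    also have "\<dots> = n1*S/4" using n2nn n3pos by (simp add: field_simps)
    also have "\<dots> \<le> Psi" using Psi_low[OF as(2-4)] by simp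
    finally show ?thesis .
  qed
  show "Psi \<le> n1 * n4 / (n5 * (n1 - \<psi>)) * E2"
    if as: "0 < n1" "n1 \<le> \<epsilon>1+\<epsilon>2" "n1 \<le> \<epsilon>2+\<epsilon>3" "n1 \<le> \<epsilon>3+\<epsilon>1"
          "\<epsilon>1+\<epsilon>2 \<le> n4" "\<epsilon>2+\<epsilon>3 \<le> n4" "\<epsilon>3+\<epsilon>1 \<le> n4"
          "0 < n5" "n5 \<le> (\<epsilon>1+\<epsilon>2)^2" "n5 \<le> (\<epsilon>2+\<epsilon>3)^2" "n5 \<le> (\<epsilon>3+\<epsilon>1)^2"
          "\<psi> < n1" "Psi < \<psi>"
  proof -
    have n4pos: "n4 > 0" using as ep by linarith
    have Psi_up: "4*Psi \<le> n4*S"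
    proof -
      have "h1*X1 \<le> n4*X1" "h2*X2 \<le> n4*X2" "h3*X3 \<le> n4*X3"
        using as X1nn X2nn X3nn unfolding h1_def h2_def h3_def
        by (auto intro!: mult_right_mono simp: add.commute)
      then show ?thesis using Psi_eq unfolding S_def by (simp add: algebra_simps)
    qed
    have E2ge: "X0*(n5*S) \<le> 16*E2"
    proof -
      have "n5*X1 \<le> h1^2*X1" "n5*X2 \<le> h2^2*X2" "n5*X3 \<le> h3^2*X3"
        using as X1nn X2nn X3nn unfolding h1_def h2_def h3_def
        by (auto intro!: mult_right_mono simp: add.commute)
      then have "n5*S \<le> h1^2*X1+h2^2*X2+h3^2*X3" unfolding S_def by (simp add: algebra_simps)
      then have "X0*(n5*S) \<le> X0*(h1^2*X1+h2^2*X2+h3^2*X3)" using X0nn by (rule mult_left_mono)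
      moreover have "d1^2*(X2*X3) + d2^2*(X1*X3) + d3^2*(X1*X2) \<ge> 0"
        using X1nn X2nn X3nn by simp
      ultimately show ?thesis using E2_eq by linarith
    qed
    have nS: "n1*S \<le> 4*\<psi>" using Psi_low[OF as(2-4)] as(13) by linarith
    have dpos: "n1 - \<psi> > 0" using as by simp
    have key: "n4*S*(4*(n1-\<psi>)) \<le> n1*n4*((4-S)*S)"
    proof -
      have "n4*S*(4*(n1-\<psi>)) - n1*n4*((4-S)*S) = n4*S*(n1*S - 4*\<psi>)" by (simp add: algebra_simps)
      moreover have "n4*S*(n1*S - 4*\<psi>) \<le> 0" using n4pos Snn nS
        by (simp add: mult_nonneg_nonpos)
      ultimately show ?thesis by linarith
    qed
    have "16*Psi*(n5*(n1-\<psi>)) \<le> 4*n4*S*(n5*(n1-\<psi>))"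
      using Psi_up as dpos by (intro mult_right_mono) (auto simp: mult.commute)
    also have "\<dots> = n5*(n4*S*(4*(n1-\<psi>)))" by (simp add: algebra_simps)
    also have "\<dots> \<le> n5*(n1*n4*((4-S)*S))" using key as by (intro mult_left_mono) auto
    also have "\<dots> = n1*n4*(X0*(n5*S))" unfolding S_eq by (simp add: algebra_simps)
    also have "\<dots> \<le> n1*n4*(16*E2)" using E2ge as n4pos by (intro mult_left_mono) auto
    finally have "16*Psi*(n5*(n1-\<psi>)) \<le> n1*n4*(16*E2)" .
    then show ?thesis using as dpos by (simp add: field_simps)
  qed
qed


lemma SO3_facts:
  assumes "Q \<in> SO3"
  shows "transpose Q ** Q = mat 1" "Q ** transpose Q = mat 1" "det Q = 1"
  using assms matrix_left_right_inverse unfolding SO3_def by auto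

lemma QE_SO3:
  assumes "R1 \<in> SO3" "R2 \<in> SO3" shows "QE R1 R2 \<in> SO3"
proof -
  have a: "transpose R1 ** R1 = mat 1" "R2 ** transpose R2 = mat 1" "det R1 = 1" "det R2 = 1"
    using SO3_facts assms by auto
  have "transpose (R1 ** transpose R2) ** (R1 ** transpose R2) = R2 ** (transpose R1 ** R1) ** transpose R2"
    by (simp add: matrix_transpose_mul matrix_mul_assoc)
  also have "\<dots> = mat 1" using a by simp
  finally show ?thesis unfolding SO3_def QE_def using a by (simp add: det_mul)
qed

lemma SO3_entries:
  fixes Q :: "real^3^3"
  assumes "Q \<in> SO3"
  shows "Q$1$1*Q$1$1+Q$2$1*Q$2$1+Q$3$1*Q$3$1=1"
   "Q$1$2*Q$1$2+Q$2$2*Q$2$2+Q$3$2*Q$3$2=1"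
   "Q$1$3*Q$1$3+Q$2$3*Q$2$3+Q$3$3*Q$3$3=1"
   "Q$1$1*Q$1$2+Q$2$1*Q$2$2+Q$3$1*Q$3$2=0"
   "Q$1$1*Q$1$3+Q$2$1*Q$2$3+Q$3$1*Q$3$3=0"
   "Q$1$2*Q$1$3+Q$2$2*Q$2$3+Q$3$2*Q$3$3=0"
   "Q$1$1*Q$1$1+Q$1$2*Q$1$2+Q$1$3*Q$1$3=1"
   "Q$2$1*Q$2$1+Q$2$2*Q$2$2+Q$2$3*Q$2$3=1"
   "Q$3$1*Q$3$1+Q$3$2*Q$3$2+Q$3$3*Q$3$3=1"
   "Q$1$1*Q$2$1+Q$1$2*Q$2$2+Q$1$3*Q$2$3=0"
   "Q$1$1*Q$3$1+Q$1$2*Q$3$2+Q$1$3*Q$3$3=0"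
   "Q$2$1*Q$3$1+Q$2$2*Q$3$2+Q$2$3*Q$3$3=0"
   "Q$1$1*(Q$2$2*Q$3$3-Q$2$3*Q$3$2) - Q$1$2*(Q$2$1*Q$3$3-Q$2$3*Q$3$1) + Q$1$3*(Q$2$1*Q$3$2-Q$2$2*Q$3$1) = 1"
proof -
  note f = SO3_facts[OF assms]
  from f(1) have A: "\<And>i j. (transpose Q ** Q)$i$j = mat 1 $ i $ j" by simp
  from f(2) have B: "\<And>i j. (Q ** transpose Q)$i$j = mat 1 $ i $ j" by simp
  show "Q$1$1*Q$1$1+Q$2$1*Q$2$1+Q$3$1*Q$3$1=1"
   "Q$1$2*Q$1$2+Q$2$2*Q$2$2+Q$3$2*Q$3$2=1"
   "Q$1$3*Q$1$3+Q$2$3*Q$2$3+Q$3$3*Q$3$3=1"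
   "Q$1$1*Q$1$2+Q$2$1*Q$2$2+Q$3$1*Q$3$2=0"
   "Q$1$1*Q$1$3+Q$2$1*Q$2$3+Q$3$1*Q$3$3=0"
   "Q$1$2*Q$1$3+Q$2$2*Q$2$3+Q$3$2*Q$3$3=0"
    using A[of 1 1] A[of 2 2] A[of 3 3] A[of 1 2] A[of 1 3] A[of 2 3]
    by (simp_all add: matrix_matrix_mult_def sum_3 transpose_def mat_def)
  show "Q$1$1*Q$1$1+Q$1$2*Q$1$2+Q$1$3*Q$1$3=1"
   "Q$2$1*Q$2$1+Q$2$2*Q$2$2+Q$2$3*Q$2$3=1"
   "Q$3$1*Q$3$1+Q$3$2*Q$3$2+Q$3$3*Q$3$3=1"
   "Q$1$1*Q$2$1+Q$1$2*Q$2$2+Q$1$3*Q$2$3=0"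
   "Q$1$1*Q$3$1+Q$1$2*Q$3$2+Q$1$3*Q$3$3=0"
   "Q$2$1*Q$3$1+Q$2$2*Q$3$2+Q$2$3*Q$3$3=0"
    using B[of 1 1] B[of 2 2] B[of 3 3] B[of 1 2] B[of 1 3] B[of 2 3]
    by (simp_all add: matrix_matrix_mult_def sum_3 transpose_def mat_def)
  show "Q$1$1*(Q$2$2*Q$3$3-Q$2$3*Q$3$2) - Q$1$2*(Q$2$1*Q$3$3-Q$2$3*Q$3$1) + Q$1$3*(Q$2$1*Q$3$2-Q$2$2*Q$3$1) = 1"
    using f(3) by (simp add: det_3 algebra_simps)
qed

lemma Psi_entries:
  "PsiE (diag3 e1 e2 e3) R1 R2 = 1/2*(e1*(1-QE R1 R2$1$1)+e2*(1-QE R1 R2$2$2)+e3*(1-QE R1 R2$3$3))"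
  unfolding PsiE_def
  by (simp add: trace_def sum_3 matrix_matrix_mult_def diag3_def mat_def algebra_simps)

lemma eRE_entries:
  "eRE (diag3 e1 e2 e3) R1 R2 = (let Q = QE R1 R2 in
     vector [1/2*(e2*Q$3$2-e3*Q$2$3), 1/2*(e3*Q$1$3-e1*Q$3$1), 1/2*(e1*Q$2$1-e2*Q$1$2)])"
  unfolding eRE_def Let_def
  by (simp add: vec_eq_iff forall_3 vee_def sum_3 matrix_matrix_mult_def diag3_def transpose_def algebra_simps)

lemma norm3sq: "(norm (v::real^3))^2 = (v$1)^2 + (v$2)^2 + (v$3)^2"
  unfolding power2_norm_eq_inner by (simp add: inner_vec_def sum_3 power2_eq_square)

lemma QE_eq_I:
  fixes Q :: "real^3^3"
  shows "Q = mat 1 \<longleftrightarrow> Q$1$1=1 \<and> Q$1$2=0 \<and> Q$1$3=0 \<and> Q$2$1=0 \<and> Q$2$2=1 \<and> Q$2$3=0 \<and> Q$3$1=0 \<and> Q$3$2=0 \<and> Q$3$3=1"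
  by (auto simp: vec_eq_iff forall_3 mat_def)



lemma bb_mm: "bounded_bilinear ((**) :: real^3^3 \<Rightarrow> real^3^3 \<Rightarrow> real^3^3)"
  unfolding bilinear_conv_bounded_bilinear[symmetric] bilinear_def linear_iff
  by (simp add: vec_eq_iff matrix_matrix_mult_def sum_3 algebra_simps)

lemma bl_transpose: "bounded_linear (transpose :: real^3^3 \<Rightarrow> real^3^3)"
  unfolding linear_conv_bounded_linear[symmetric] linear_iff
  by (simp add: vec_eq_iff transpose_def)

lemma bl_trG: "bounded_linear (\<lambda>M::real^3^3. -(1/2) * trace (G ** M))"
  unfolding linear_conv_bounded_linear[symmetric] linear_iff
  by (simp add: trace_def matrix_matrix_mult_def sum_3 algebra_simps)

lemma bl_eR: "bounded_linear (\<lambda>M::real^3^3. (1/2) *\<^sub>R vee (M ** G - G ** transpose M))"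
  unfolding linear_conv_bounded_linear[symmetric] linear_iff
  by (simp add: vec_eq_iff forall_3 vee_def transpose_def matrix_matrix_mult_def sum_3 algebra_simps)

lemma hat_mult: "hat x *v y = cross3 x y"
  by (simp add: vec_eq_iff forall_3 hat_def matrix_vector_mult_def sum_3 cross3_def axis_def algebra_simps)

lemma hat_transpose: "transpose (hat x) = - hat x"
  by (simp add: vec_eq_iff forall_3 hat_def transpose_def cross3_def axis_def)

lemma hat_diff: "hat (x - y) = hat x - hat y"
  by (simp add: vec_eq_iff forall_3 hat_def cross3_def axis_def)

lemma rot_hat:
  assumes "rotation_matrix Q"
  shows "Q ** hat (transpose Q *v v) = hat v ** Q"
proof -
  have QQ: "Q ** transpose Q = mat 1" using assms
    unfolding rotation_matrix_def orthogonal_matrix_def by simp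
  show ?thesis
  proof (subst matrix_eq, intro allI)
    fix y
    have "(Q ** hat (transpose Q *v v)) *v y = Q *v cross3 (transpose Q *v v) y"
      by (simp add: matrix_vector_mul_assoc[symmetric] hat_mult)
    also have "\<dots> = cross3 (Q *v (transpose Q *v v)) (Q *v y)"
      using cross_rotation_matrix[OF assms] by simp
    also have "Q *v (transpose Q *v v) = v"
      by (simp add: matrix_vector_mul_assoc QQ del: transpose_matrix_vector)
    finally show "(Q ** hat (transpose Q *v v)) *v y = (hat v ** Q) *v y"
      by (simp add: matrix_vector_mul_assoc[symmetric] hat_mult)
  qed
qed

lemma psi_identity:
  fixes Q :: "real^3^3"
  shows "-(1/2) * trace (diag3 e1 e2 e3 ** (hat w ** Q)) = w \<bullet> ((1/2) *\<^sub>R vee (Q ** diag3 e1 e2 e3 - diag3 e1 e2 e3 ** transpose Q))"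
  by (simp add: trace_def inner_vec_def vee_def hat_def diag3_def transpose_def matrix_matrix_mult_def
      sum_3 cross3_def axis_def algebra_simps) (simp add: field_simps)

lemma e_identity:
  fixes Q :: "real^3^3" and e1 e2 e3 :: real and w :: "real^3"
  defines "G \<equiv> diag3 e1 e2 e3"
  shows "(1/2) *\<^sub>R vee ((hat w ** Q) ** G - G ** transpose (hat w ** Q)) =
    ((1/2) *\<^sub>R (trace (Q ** G) *\<^sub>R mat 1 - 2 *\<^sub>R hat ((1/2) *\<^sub>R vee (Q ** G - G ** transpose Q))
                              - G ** transpose Q)) *v w"
  unfolding G_def
  by (simp add: vec_eq_iff forall_3 trace_def vee_def hat_def diag3_def transpose_def matrix_matrix_mult_def
      matrix_vector_mult_def mat_def sum_3 cross3_def axis_def algebra_simps) (simp add: field_simps)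


lemma trace_aff: "trace (G ** (mat 1 - M)) = trace G - trace (G ** (M::real^3^3))"
  by (simp add: trace_def matrix_matrix_mult_def sum_3 mat_def algebra_simps)

theorem proposition1:
  fixes J0 :: "real^3^3" and \<epsilon>1 \<epsilon>2 \<epsilon>3 kE kv \<psi>E :: real
    and T :: "real set"
    and R Rb :: "real \<Rightarrow> real^3^3"
    and \<omega> \<Omega> \<omega>b \<tau> :: "real \<Rightarrow> real^3"
    and J :: "real \<Rightarrow> real^3^3"
  defines "G \<equiv> diag3 \<epsilon>1 \<epsilon>2 \<epsilon>3"
    and "n1 \<equiv> Min {\<epsilon>1 + \<epsilon>2, \<epsilon>2 + \<epsilon>3, \<epsilon>3 + \<epsilon>1}"
    and "n2 \<equiv> Max {(\<epsilon>1 - \<epsilon>2)^2, (\<epsilon>2 - \<epsilon>3)^2, (\<epsilon>3 - \<epsilon>1)^2}"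
    and "n3 \<equiv> Max {(\<epsilon>1 + \<epsilon>2)^2, (\<epsilon>2 + \<epsilon>3)^2, (\<epsilon>3 + \<epsilon>1)^2}"
    and "n4 \<equiv> Max {\<epsilon>1 + \<epsilon>2, \<epsilon>2 + \<epsilon>3, \<epsilon>3 + \<epsilon>1}"
    and "n5 \<equiv> Min {(\<epsilon>1 + \<epsilon>2)^2, (\<epsilon>2 + \<epsilon>3)^2, (\<epsilon>3 + \<epsilon>1)^2}"
  assumes J0_sym: "transpose J0 = J0"
    and J0_pd: "\<And>x. x \<noteq> 0 \<Longrightarrow> x \<bullet> (J0 *v x) > 0"
    and eps_pos: "\<epsilon>1 > 0" "\<epsilon>2 > 0" "\<epsilon>3 > 0"
    and eps_dist: "\<epsilon>1 \<noteq> \<epsilon>2" "\<epsilon>2 \<noteq> \<epsilon>3" "\<epsilon>3 \<noteq> \<epsilon>1"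
    and gains: "kE > 0" "kv > 0"
    and psi_bound: "\<psi>E < n1"
    and T_open: "open T"
    and J_def: "\<And>t. J t = R t ** J0 ** transpose (R t)"
    and R_SO3: "\<And>t. t \<in> T \<Longrightarrow> R t \<in> SO3"
    and Rb_SO3: "\<And>t. t \<in> T \<Longrightarrow> Rb t \<in> SO3"
    and dyn_mom: "\<And>t. t \<in> T \<Longrightarrow> ((\<lambda>s. J s *v \<omega> s) has_vector_derivative \<tau> t) (at t)"
    and dyn_R1: "\<And>t. t \<in> T \<Longrightarrow> (R has_vector_derivative (hat (\<omega> t) ** R t)) (at t)"
    and dyn_R2: "\<And>t. t \<in> T \<Longrightarrow> hat (\<omega> t) ** R t = R t ** hat (\<Omega> t)"
    and obs_mom: "\<And>t. t \<in> T \<Longrightarrow> ((\<lambda>s. J s *v \<omega>b s) has_vector_derivative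
                    (\<tau> t + ((1/2) * kE) *\<^sub>R (matrix_inv (J t) *v eRE G (R t) (Rb t)))) (at t)"
    and obs_R: "\<And>t. t \<in> T \<Longrightarrow> (Rb has_vector_derivative
                    (hat (transpose (QE (R t) (Rb t)) *v
                        (\<omega>b t + kv *\<^sub>R (matrix_inv (J t) *v eRE G (R t) (Rb t)))) ** Rb t)) (at t)"
  shows
    \<comment> \<open>(i)\<close>
    "(\<forall>R1 \<in> SO3. \<forall>R2 \<in> SO3. PsiE G R1 R2 \<ge> 0 \<and> (PsiE G R1 R2 = 0 \<longleftrightarrow> QE R1 R2 = mat 1))
     \<comment> \<open>(ii)\<close>
   \<and> (\<forall>R1 \<in> SO3. \<forall>R2 \<in> SO3.
        n1 / (n2 + n3) * (norm (eRE G R1 R2))^2 \<le> PsiE G R1 R2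
      \<and> (PsiE G R1 R2 < \<psi>E \<longrightarrow>
           PsiE G R1 R2 \<le> n1 * n4 / (n5 * (n1 - \<psi>E)) * (norm (eRE G R1 R2))^2))
     \<comment> \<open>(iii)--(vi)\<close>
   \<and> (\<forall>t \<in> T.
        let \<omega>E = \<omega> t - \<omega>b t - kv *\<^sub>R (matrix_inv (J t) *v eRE G (R t) (Rb t)) in
          ((\<lambda>s. QE (R s) (Rb s)) has_vector_derivative (hat \<omega>E ** QE (R t) (Rb t))) (at t)
        \<and> ((\<lambda>s. PsiE G (R s) (Rb s)) has_real_derivative (\<omega>E \<bullet> eRE G (R t) (Rb t))) (at t)
        \<and> ((\<lambda>s. eRE G (R s) (Rb s)) has_vector_derivative (Eo G (R t) (Rb t) *v \<omega>E)) (at t)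
        \<and> ((\<lambda>s. J s *v \<omega> s - J s *v \<omega>b s) has_vector_derivative
             (- ((1/2) * kE) *\<^sub>R (matrix_inv (J t) *v eRE G (R t) (Rb t)))) (at t))"
  proof -
  have epsG: "G = diag3 \<epsilon>1 \<epsilon>2 \<epsilon>3" by (simp add: G_def)
  have nf: "0 < n1" "n1 \<le> \<epsilon>1+\<epsilon>2" "n1 \<le> \<epsilon>2+\<epsilon>3" "n1 \<le> \<epsilon>3+\<epsilon>1"
          "(\<epsilon>1-\<epsilon>2)^2 \<le> n2" "(\<epsilon>2-\<epsilon>3)^2 \<le> n2" "(\<epsilon>3-\<epsilon>1)^2 \<le> n2"
          "(\<epsilon>1+\<epsilon>2)^2 \<le> n3" "(\<epsilon>2+\<epsilon>3)^2 \<le> n3" "(\<epsilon>3+\<epsilon>1)^2 \<le> n3"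
          "\<epsilon>1+\<epsilon>2 \<le> n4" "\<epsilon>2+\<epsilon>3 \<le> n4" "\<epsilon>3+\<epsilon>1 \<le> n4"
          "0 < n5" "n5 \<le> (\<epsilon>1+\<epsilon>2)^2" "n5 \<le> (\<epsilon>2+\<epsilon>3)^2" "n5 \<le> (\<epsilon>3+\<epsilon>1)^2"
    using eps_pos unfolding n1_def n2_def n3_def n4_def n5_def by auto
  have I_II: "PsiE G R1 R2 \<ge> 0 \<and> (PsiE G R1 R2 = 0 \<longleftrightarrow> QE R1 R2 = mat 1)
      \<and> (n1 / (n2 + n3) * (norm (eRE G R1 R2))^2 \<le> PsiE G R1 R2
      \<and> (PsiE G R1 R2 < \<psi>E \<longrightarrow>
           PsiE G R1 R2 \<le> n1 * n4 / (n5 * (n1 - \<psi>E)) * (norm (eRE G R1 R2))^2))"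
    if R12: "R1 \<in> SO3" "R2 \<in> SO3" for R1 R2
  proof -
    define Q where "Q = QE R1 R2"
    have QS: "Q \<in> SO3" using QE_SO3[OF R12] Q_def by simp
    note E = SO3_entries[OF QS]
    note A = so3_alg[of "Q$1$1" "Q$2$1" "Q$3$1" "Q$1$2" "Q$2$2" "Q$3$2" "Q$1$3" "Q$2$3" "Q$3$3"
        \<epsilon>1 \<epsilon>2 \<epsilon>3, OF E eps_pos]
    have P: "PsiE G R1 R2 = 1/2*(\<epsilon>1*(1-Q$1$1)+\<epsilon>2*(1-Q$2$2)+\<epsilon>3*(1-Q$3$3))"
      unfolding epsG Psi_entries Q_def ..
    have N: "(norm (eRE G R1 R2))^2 = (1/2*(\<epsilon>2*Q$3$2-\<epsilon>3*Q$2$3))^2+(1/2*(\<epsilon>3*Q$1$3-\<epsilon>1*Q$3$1))^2+(1/2*(\<epsilon>1*Q$2$1-\<epsilon>2*Q$1$2))^2"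
      unfolding norm3sq epsG eRE_entries Q_def Let_def by simp
    show ?thesis
      unfolding P N Q_def[symmetric] QE_eq_I
      using A(1) A(2) A(3)[OF nf(1-10)] A(4)[OF nf(1-4) nf(11-17) psi_bound] by blast
  qed
  have III: "let \<omega>E = \<omega> t - \<omega>b t - kv *\<^sub>R (matrix_inv (J t) *v eRE G (R t) (Rb t)) in
          ((\<lambda>s. QE (R s) (Rb s)) has_vector_derivative (hat \<omega>E ** QE (R t) (Rb t))) (at t)
        \<and> ((\<lambda>s. PsiE G (R s) (Rb s)) has_real_derivative (\<omega>E \<bullet> eRE G (R t) (Rb t))) (at t)
        \<and> ((\<lambda>s. eRE G (R s) (Rb s)) has_vector_derivative (Eo G (R t) (Rb t) *v \<omega>E)) (at t)
        \<and> ((\<lambda>s. J s *v \<omega> s - J s *v \<omega>b s) has_vector_derivative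
             (- ((1/2) * kE) *\<^sub>R (matrix_inv (J t) *v eRE G (R t) (Rb t)))) (at t)"
    if t: "t \<in> T" for t
  proof -
    define Q where "Q = QE (R t) (Rb t)"
    define v where "v = \<omega>b t + kv *\<^sub>R (matrix_inv (J t) *v eRE G (R t) (Rb t))"
    define wE where "wE = \<omega> t - \<omega>b t - kv *\<^sub>R (matrix_inv (J t) *v eRE G (R t) (Rb t))"
    have wE_eq: "wE = \<omega> t - v" unfolding wE_def v_def by (simp add: algebra_simps)
    have QS: "Q \<in> SO3" using QE_SO3[OF R_SO3[OF t] Rb_SO3[OF t]] Q_def by simp
    have rotQ: "rotation_matrix Q" using QS
      unfolding SO3_def rotation_matrix_def orthogonal_matrix by simp
    define u where "u = transpose Q *v v"
    have dRb: "(Rb has_vector_derivative (hat u ** Rb t)) (at t)"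
      using obs_R[OF t] unfolding u_def v_def Q_def .
    have dRbT: "((\<lambda>s. transpose (Rb s)) has_vector_derivative transpose (hat u ** Rb t)) (at t)"
      using bounded_linear.has_vector_derivative[OF bl_transpose dRb] .
    have dQ0: "((\<lambda>s. R s ** transpose (Rb s)) has_vector_derivative
        (R t ** transpose (hat u ** Rb t) + (hat (\<omega> t) ** R t) ** transpose (Rb t))) (at t)"
      using bounded_bilinear.has_vector_derivative[OF bb_mm dyn_R1[OF t] dRbT] .
    have val: "R t ** transpose (hat u ** Rb t) + (hat (\<omega> t) ** R t) ** transpose (Rb t) = hat wE ** Q"
    proof -
      have "R t ** transpose (hat u ** Rb t) = Q ** (- hat u)"
        unfolding Q_def QE_def by (simp add: matrix_transpose_mul hat_transpose matrix_mul_assoc)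
      also have "\<dots> = - (hat v ** Q)"
        using bounded_bilinear.minus_right[OF bb_mm] rot_hat[OF rotQ] unfolding u_def by simp
      finally have 1: "R t ** transpose (hat u ** Rb t) = - (hat v ** Q)" .
      have 2: "(hat (\<omega> t) ** R t) ** transpose (Rb t) = hat (\<omega> t) ** Q"
        unfolding Q_def QE_def by (simp add: matrix_mul_assoc)
      show ?thesis unfolding 1 2 wE_eq hat_diff bounded_bilinear.diff_left[OF bb_mm] by simp
    qed
    have dQ: "((\<lambda>s. QE (R s) (Rb s)) has_vector_derivative (hat wE ** Q)) (at t)"
    proof -
      have fq: "(\<lambda>s. QE (R s) (Rb s)) = (\<lambda>s. R s ** transpose (Rb s))" by (simp add: QE_def)
      show ?thesis unfolding fq val[symmetric] by (rule dQ0)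
    qed
    have dPsi: "((\<lambda>s. PsiE G (R s) (Rb s)) has_real_derivative (wE \<bullet> eRE G (R t) (Rb t))) (at t)"
    proof -
      have fe: "(\<lambda>s. PsiE G (R s) (Rb s)) = (\<lambda>s. (1/2) * trace G + (-(1/2) * trace (G ** QE (R s) (Rb s))))"
        unfolding PsiE_def trace_aff by (simp add: algebra_simps)
      have "((\<lambda>s. -(1/2) * trace (G ** QE (R s) (Rb s))) has_vector_derivative
             (-(1/2) * trace (G ** (hat wE ** Q)))) (at t)"
        using bounded_linear.has_vector_derivative[OF bl_trG dQ] .
      also have "-(1/2) * trace (G ** (hat wE ** Q)) = wE \<bullet> eRE G (R t) (Rb t)"
        unfolding epsG eRE_def Q_def psi_identity ..
      finally have "((\<lambda>s. (1/2) * trace G + (-(1/2) * trace (G ** QE (R s) (Rb s)))) has_vector_derivative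
             (0 + wE \<bullet> eRE G (R t) (Rb t))) (at t)"
        by (intro has_vector_derivative_add has_vector_derivative_const)
      then show ?thesis unfolding fe has_real_derivative_iff_has_vector_derivative by simp
    qed
    have de: "((\<lambda>s. eRE G (R s) (Rb s)) has_vector_derivative (Eo G (R t) (Rb t) *v wE)) (at t)"
    proof -
      have "((\<lambda>s. (1/2) *\<^sub>R vee (QE (R s) (Rb s) ** G - G ** transpose (QE (R s) (Rb s)))) has_vector_derivative
          ((1/2) *\<^sub>R vee ((hat wE ** Q) ** G - G ** transpose (hat wE ** Q)))) (at t)"
        using bounded_linear.has_vector_derivative[OF bl_eR dQ] .
      also have "(1/2) *\<^sub>R vee ((hat wE ** Q) ** G - G ** transpose (hat wE ** Q)) = Eo G (R t) (Rb t) *v wE"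
        unfolding epsG Eo_def eRE_def Q_def e_identity ..
      finally show ?thesis unfolding eRE_def .
    qed
    have dJ: "((\<lambda>s. J s *v \<omega> s - J s *v \<omega>b s) has_vector_derivative
             (- ((1/2) * kE) *\<^sub>R (matrix_inv (J t) *v eRE G (R t) (Rb t)))) (at t)"
      using has_vector_derivative_diff[OF dyn_mom[OF t] obs_mom[OF t]] by simp
    show ?thesis unfolding Let_def wE_def[symmetric] Q_def[symmetric] using dQ dPsi de dJ by blast
  qed
  show ?thesis using I_II III by blast
qed

end
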